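(* Let $G$ be a finite simple graph with a homogeneous set $H$, let $k = \chi(G[H])$, and let $K_k$ be a clique on $k$ vertices disjoint from $G$. Let $g(G,H,K_k)$ be the graph obtained from $G$ by deleting $H$, adding $K_k$, and joining every vertex of $V(G)\setminus H$ that has a neighbor in $H$ to all vertices of $K_k$. Then (i) $\chi(G) = \chi(g(G,H,K_k))$; and (ii) if $G$ contains no induced banner and no induced odd hole, then neither does $g(G,H,K_k)$.
   Context: $\chi$ denotes chromatic number. A set $H \subseteq V(G)$ is homogeneous if $2 \leq |H| < |V(G)|$ and every vertex of $V(G)\setminus H$ is adjacent either to all of $H$ or to none of $H$. A hole is a chordless cycle with at least four vertices; it is odd if it has an odd number of vertices. A banner is a hole on four vertices plus one vertex adjacent to exactly one vertex of that hole. *)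

theory Defs
  imports Main
begin

definition simple_graph :: "'a set \<Rightarrow> ('a \<Rightarrow> 'a \<Rightarrow> bool) \<Rightarrow> bool" where
  "simple_graph V E \<longleftrightarrow> finite V \<and> (\<forall>x y. E x y \<longrightarrow> E y x) \<and> (\<forall>x. \<not> E x x)
     \<and> (\<forall>x y. E x y \<longrightarrow> x \<in> V \<and> y \<in> V)"

text \<open>Proper colourings with colours from {0..<k} of the graph (V,E); for a subset
V of the vertex set of a graph this is a colouring of the induced subgraph on V.\<close>
definition colorable :: "'a set \<Rightarrow> ('a \<Rightarrow> 'a \<Rightarrow> bool) \<Rightarrow> nat \<Rightarrow> bool" where
  "colorable V E k \<longleftrightarrow> (\<exists>c :: 'a \<Rightarrow> nat. (\<forall>x\<in>V. c x < k) \<and>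
      (\<forall>x\<in>V. \<forall>y\<in>V. E x y \<longrightarrow> c x \<noteq> c y))"

definition chi :: "'a set \<Rightarrow> ('a \<Rightarrow> 'a \<Rightarrow> bool) \<Rightarrow> nat" where
  "chi V E = (LEAST k. colorable V E k)"

definition homogeneous :: "'a set \<Rightarrow> ('a \<Rightarrow> 'a \<Rightarrow> bool) \<Rightarrow> 'a set \<Rightarrow> bool" where
  "homogeneous V E H \<longleftrightarrow> H \<subseteq> V \<and> 2 \<le> card H \<and> card H < card V \<and>
     (\<forall>v\<in>V - H. (\<forall>h\<in>H. E v h) \<or> (\<forall>h\<in>H. \<not> E v h))"

definition is_hole :: "'a set \<Rightarrow> ('a \<Rightarrow> 'a \<Rightarrow> bool) \<Rightarrow> 'a list \<Rightarrow> bool" where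
  "is_hole V E vs \<longleftrightarrow> distinct vs \<and> set vs \<subseteq> V \<and> 4 \<le> length vs \<and>
     (\<forall>i<length vs. \<forall>j<length vs.
        E (vs ! i) (vs ! j) \<longleftrightarrow> (j = Suc i mod length vs \<or> i = Suc j mod length vs))"

definition has_odd_hole :: "'a set \<Rightarrow> ('a \<Rightarrow> 'a \<Rightarrow> bool) \<Rightarrow> bool" where
  "has_odd_hole V E \<longleftrightarrow> (\<exists>vs. is_hole V E vs \<and> odd (length vs))"

definition has_banner :: "'a set \<Rightarrow> ('a \<Rightarrow> 'a \<Rightarrow> bool) \<Rightarrow> bool" where
  "has_banner V E \<longleftrightarrow> (\<exists>a b c d e. is_hole V E [a, b, c, d] \<and> e \<in> V \<and>
     e \<notin> {a, b, c, d} \<and> E e a \<and> \<not> E e b \<and> \<not> E e c \<and> \<not> E e d)"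

definition g_vertices :: "'a set \<Rightarrow> 'a set \<Rightarrow> 'a set \<Rightarrow> 'a set" where
  "g_vertices V H K = (V - H) \<union> K"

definition g_edges :: "'a set \<Rightarrow> ('a \<Rightarrow> 'a \<Rightarrow> bool) \<Rightarrow> 'a set \<Rightarrow> 'a set \<Rightarrow> 'a \<Rightarrow> 'a \<Rightarrow> bool" where
  "g_edges V E H K x y \<longleftrightarrow>
     (x \<in> V - H \<and> y \<in> V - H \<and> E x y)
   \<or> (x \<in> K \<and> y \<in> K \<and> x \<noteq> y)
   \<or> (x \<in> V - H \<and> (\<exists>h\<in>H. E x h) \<and> y \<in> K)
   \<or> (y \<in> V - H \<and> (\<exists>h\<in>H. E y h) \<and> x \<in> K)"

end

theory Submission
  imports Defs
begin

lemma chi_le: "colorable A F k \<Longrightarrow> chi A F \<le> k"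
  unfolding chi_def by (rule Least_le)

lemma colorable_chi: "colorable A F k \<Longrightarrow> colorable A F (chi A F)"
  unfolding chi_def by (rule LeastI)

lemma colorable_recolor:
  assumes "finite A" and "\<forall>x\<in>A. \<forall>y\<in>A. F x y \<longrightarrow> c x \<noteq> (c y::nat)"
  shows "colorable A F (card (c ` A))"
proof -
  obtain h where h: "bij_betw h (c ` A) {0..<card (c ` A)}"
    using ex_bij_betw_finite_nat[of "c ` A"] assms(1) by blast
  have "\<forall>x\<in>A. h (c x) < card (c ` A)" using h by (auto simp: bij_betw_def)
  moreover have "\<forall>x\<in>A. \<forall>y\<in>A. F x y \<longrightarrow> h (c x) \<noteq> h (c y)"
    using h assms(2) by (auto simp: bij_betw_def inj_on_def)
  ultimately show ?thesis unfolding colorable_def by (intro exI[of _ "h \<circ> c"]) auto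
qed

lemma colorable_card:
  assumes "finite A" and "\<forall>x. \<not> F x x"
  shows "colorable A F (card A)"
proof -
  obtain h where h: "bij_betw h A {0..<card A}"
    using ex_bij_betw_finite_nat[of A] assms(1) by blast
  show ?thesis unfolding colorable_def
    by (intro exI[of _ h]) (use h assms(2) in \<open>auto simp: bij_betw_def inj_on_def\<close>)
qed

lemma hom_all:
  assumes "homogeneous V E H" "x \<in> V - H" "h \<in> H" "E x h" "h' \<in> H"
  shows "E x h'"
  using assms unfolding homogeneous_def by blast

lemma part1_to:
  assumes sg: "simple_graph V E" and hom: "homogeneous V E H"
    and fK: "finite K" and disj: "K \<inter> V = {}" and cK: "card K = chi H E"
    and col: "colorable V E k"
  shows "colorable (g_vertices V H K) (g_edges V E H K) k"
proof -
  obtain c where c1: "\<forall>x\<in>V. c x < k" and c2: "\<forall>x\<in>V. \<forall>y\<in>V. E x y \<longrightarrow> c x \<noteq> c y"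
    using col unfolding colorable_def by blast
  have HV: "H \<subseteq> V" using hom unfolding homogeneous_def by blast
  have fV: "finite V" using sg unfolding simple_graph_def by blast
  have fH: "finite H" using HV fV finite_subset by blast
  have "colorable H E (card (c ` H))"
    by (rule colorable_recolor) (use fH c2 HV in auto)
  hence "card K \<le> card (c ` H)" using cK chi_le by metis
  then obtain \<psi> where psi1: "\<psi> ` K \<subseteq> c ` H" and psi2: "inj_on \<psi> K"
    using card_le_inj[of K "c ` H"] fK fH by blast
  define c' where "c' x = (if x \<in> K then \<psi> x else c x)" for x
  have A: "\<forall>x\<in>g_vertices V H K. c' x < k"
  proof
    fix x assume x: "x \<in> g_vertices V H K"
    show "c' x < k"
    proof (cases "x \<in> K")
      case True
      then obtain h where "h \<in> H" "\<psi> x = c h" using psi1 by blast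
      thus ?thesis using True c1 HV c'_def by auto
    next
      case False thus ?thesis using x c1 c'_def unfolding g_vertices_def by auto
    qed
  qed
  have B: "\<forall>x\<in>g_vertices V H K. \<forall>y\<in>g_vertices V H K. g_edges V E H K x y \<longrightarrow> c' x \<noteq> c' y"
  proof (intro ballI impI)
    fix x y assume x: "x \<in> g_vertices V H K" and y: "y \<in> g_vertices V H K"
      and e: "g_edges V E H K x y"
    have xV: "x \<in> V - H \<Longrightarrow> x \<notin> K" and yV: "y \<in> V - H \<Longrightarrow> y \<notin> K" using disj by auto
    consider "x \<in> V - H" "y \<in> V - H" "E x y" | "x \<in> K" "y \<in> K" "x \<noteq> y"
      | h where "x \<in> V - H" "h \<in> H" "E x h" "y \<in> K"
      | h where "y \<in> V - H" "h \<in> H" "E y h" "x \<in> K"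
      using e unfolding g_edges_def by blast
    thus "c' x \<noteq> c' y"
    proof cases
      case 1 thus ?thesis using c2 xV yV c'_def by auto
    next
      case 2 thus ?thesis using psi2 c'_def by (auto simp: inj_on_def)
    next
      case (3 h)
      then obtain h' where h': "h' \<in> H" "\<psi> y = c h'" using psi1 by blast
      have "E x h'" using hom_all[OF hom 3(1,2,3) h'(1)] .
      thus ?thesis using c2 3 h' HV xV c'_def by auto
    next
      case (4 h)
      then obtain h' where h': "h' \<in> H" "\<psi> x = c h'" using psi1 by blast
      have "E y h'" using hom_all[OF hom 4(1,2,3) h'(1)] .
      thus ?thesis using c2 4 h' HV yV c'_def by fastforce
    qed
  qed
  show ?thesis unfolding colorable_def using A B by blast
qed

lemma part1_from:
  assumes sg: "simple_graph V E" and hom: "homogeneous V E H"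
    and fK: "finite K" and disj: "K \<inter> V = {}" and cK: "card K = chi H E"
    and col: "colorable (g_vertices V H K) (g_edges V E H K) k"
  shows "colorable V E k"
proof -
  obtain c' where c1: "\<forall>x\<in>g_vertices V H K. c' x < k"
    and c2: "\<forall>x\<in>g_vertices V H K. \<forall>y\<in>g_vertices V H K. g_edges V E H K x y \<longrightarrow> c' x \<noteq> c' y"
    using col unfolding colorable_def by blast
  have HV: "H \<subseteq> V" using hom unfolding homogeneous_def by blast
  have fV: "finite V" using sg unfolding simple_graph_def by blast
  have fH: "finite H" using HV fV finite_subset by blast
  have irr: "\<forall>x. \<not> E x x" using sg unfolding simple_graph_def by blast
  have sym: "\<And>x y. E x y \<Longrightarrow> E y x" using sg unfolding simple_graph_def by blast
  have "colorable H E (card K)" using colorable_chi[OF colorable_card[of H E, OF fH irr]] cK by simp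
  then obtain d where d1: "\<forall>x\<in>H. d x < card K" and d2: "\<forall>x\<in>H. \<forall>y\<in>H. E x y \<longrightarrow> d x \<noteq> d y"
    unfolding colorable_def by blast
  obtain \<beta> where bb: "bij_betw \<beta> {0..<card K} K" using ex_bij_betw_nat_finite[OF fK] by blast
  have bK: "\<And>x. x \<in> H \<Longrightarrow> \<beta> (d x) \<in> K" using bb d1 by (auto simp: bij_betw_def)
  have binj: "\<And>x y. x \<in> H \<Longrightarrow> y \<in> H \<Longrightarrow> d x \<noteq> d y \<Longrightarrow> \<beta> (d x) \<noteq> \<beta> (d y)"
    using bb d1 by (auto simp: bij_betw_def inj_on_def)
  have Kg: "K \<subseteq> g_vertices V H K" unfolding g_vertices_def by blast
  have cinj: "\<And>x y. x \<in> K \<Longrightarrow> y \<in> K \<Longrightarrow> x \<noteq> y \<Longrightarrow> c' x \<noteq> c' y"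
    using c2 Kg unfolding g_edges_def by blast
  define c where "c x = (if x \<in> H then c' (\<beta> (d x)) else c' x)" for x
  have A: "\<forall>x\<in>V. c x < k"
  proof
    fix x assume "x \<in> V"
    thus "c x < k" using c1 bK Kg unfolding c_def g_vertices_def by auto
  qed
  have edgeVH: "c x \<noteq> c y" if "x \<in> V - H" "y \<in> H" "E x y" for x y
  proof -
    have "g_edges V E H K x (\<beta> (d y))" using that bK unfolding g_edges_def by blast
    moreover have "x \<in> g_vertices V H K" "\<beta> (d y) \<in> g_vertices V H K"
      using that bK Kg unfolding g_vertices_def by auto
    ultimately show ?thesis using c2 that unfolding c_def by auto
  qed
  have B: "\<forall>x\<in>V. \<forall>y\<in>V. E x y \<longrightarrow> c x \<noteq> c y"
  proof (intro ballI impI)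
    fix x y assume x: "x \<in> V" and y: "y \<in> V" and e: "E x y"
    show "c x \<noteq> c y"
    proof (cases "x \<in> H")
      case xH: True
      show ?thesis
      proof (cases "y \<in> H")
        case True
        thus ?thesis using xH e d2 binj bK cinj unfolding c_def by metis
      next
        case False
        thus ?thesis using edgeVH[of y x] sym[OF e] xH y by auto
      qed
    next
      case xH: False
      show ?thesis
      proof (cases "y \<in> H")
        case True
        thus ?thesis using edgeVH[of x y] e xH x by auto
      next
        case False
        have "g_edges V E H K x y" using x y xH False e unfolding g_edges_def by blast
        moreover have "x \<in> g_vertices V H K" "y \<in> g_vertices V H K"
          using x y xH False unfolding g_vertices_def by auto
        ultimately show ?thesis using c2 xH False unfolding c_def by auto
      qed
    qed
  qed
  show ?thesis unfolding colorable_def using A B by blast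
qed

lemma suc_mod_cases: "i < (n::nat) \<Longrightarrow> Suc i mod n = (if Suc i = n then 0 else Suc i)"
  by auto

lemma tri_arith:
  assumes "4 \<le> (n::nat)" "i < n" "j < n" "l < n" "i \<noteq> j" "i \<noteq> l" "j \<noteq> l"
    "j = Suc i mod n \<or> i = Suc j mod n"
    "l = Suc i mod n \<or> i = Suc l mod n"
    "l = Suc j mod n \<or> j = Suc l mod n"
  shows False
  using assms by (simp add: suc_mod_cases split: if_splits) linarith+

lemma hole_no_triangle:
  assumes h: "is_hole W F vs" and xyz: "x \<in> set vs" "y \<in> set vs" "z \<in> set vs"
    and d: "x \<noteq> y" "x \<noteq> z" "y \<noteq> z"
    and e: "F x y" "F x z" "F y z"
  shows False
proof -
  obtain i where i: "i < length vs" "vs ! i = x" using xyz(1) by (auto simp: in_set_conv_nth)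
  obtain j where j: "j < length vs" "vs ! j = y" using xyz(2) by (auto simp: in_set_conv_nth)
  obtain l where l: "l < length vs" "vs ! l = z" using xyz(3) by (auto simp: in_set_conv_nth)
  have H: "\<forall>i<length vs. \<forall>j<length vs.
        F (vs ! i) (vs ! j) \<longleftrightarrow> (j = Suc i mod length vs \<or> i = Suc j mod length vs)"
    and n: "4 \<le> length vs" using h unfolding is_hole_def by blast+
  show False
    apply (rule tri_arith[OF n i(1) j(1) l(1)])
    using d i j l apply blast+
    using H i j l e apply blast+
    done
qed

lemma hole_transfer:
  assumes h: "is_hole W F vs" and inj: "inj_on f (set vs)" and im: "f ` set vs \<subseteq> V"
    and eq: "\<forall>x\<in>set vs. \<forall>y\<in>set vs. F x y \<longleftrightarrow> E (f x) (f y)"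
  shows "is_hole V E (map f vs)"
proof -
  have H: "\<forall>i<length vs. \<forall>j<length vs.
        F (vs ! i) (vs ! j) \<longleftrightarrow> (j = Suc i mod length vs \<or> i = Suc j mod length vs)"
    and n: "4 \<le> length vs" and dd: "distinct vs" using h unfolding is_hole_def by blast+
  show ?thesis unfolding is_hole_def
  proof (intro conjI allI impI)
    show "distinct (map f vs)" using dd inj by (simp add: distinct_map)
    show "set (map f vs) \<subseteq> V" using im by simp
    show "4 \<le> length (map f vs)" using n by simp
    fix i j assume "i < length (map f vs)" "j < length (map f vs)"
    hence ij: "i < length vs" "j < length vs" by auto
    have "E (map f vs ! i) (map f vs ! j) \<longleftrightarrow> F (vs ! i) (vs ! j)"
      using eq ij by (simp add: nth_mem)
    thus "E (map f vs ! i) (map f vs ! j) \<longleftrightarrow>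
        (j = Suc i mod length (map f vs) \<or> i = Suc j mod length (map f vs))"
      using H ij by simp
  qed
qed

lemma embed_gen:
  assumes sg: "simple_graph V E" and hom: "homogeneous V E H" and disj: "K \<inter> V = {}"
    and S: "S \<subseteq> g_vertices V H K"
    and phiH: "\<forall>x\<in>S \<inter> K. \<phi> x \<in> H"
    and phiE: "\<forall>x\<in>S \<inter> K. \<forall>y\<in>S \<inter> K. x \<noteq> y \<longrightarrow> E (\<phi> x) (\<phi> y)"
  shows "\<exists>f. inj_on f S \<and> f ` S \<subseteq> V \<and> (\<forall>x\<in>S. \<forall>y\<in>S. g_edges V E H K x y \<longleftrightarrow> E (f x) (f y))"
proof -
  have HV: "H \<subseteq> V" using hom unfolding homogeneous_def by blast
  have irr: "\<forall>x. \<not> E x x" using sg unfolding simple_graph_def by blast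
  have sym: "\<And>x y. E x y \<Longrightarrow> E y x" using sg unfolding simple_graph_def by blast
  define f where "f x = (if x \<in> K then \<phi> x else x)" for x
  have Sc: "\<And>x. x \<in> S \<Longrightarrow> x \<notin> K \<Longrightarrow> x \<in> V - H" using S unfolding g_vertices_def by blast
  have inj: "inj_on f S"
  proof (rule inj_onI)
    fix x y assume x: "x \<in> S" and y: "y \<in> S" and fe: "f x = f y"
    show "x = y"
    proof (cases "x \<in> K"; cases "y \<in> K")
      assume "x \<in> K" "y \<in> K"
      thus ?thesis using fe phiE x y irr unfolding f_def by (metis IntI)
    next
      assume "x \<in> K" "y \<notin> K"
      thus ?thesis using fe phiH x y Sc[of y] unfolding f_def by auto
    next
      assume "x \<notin> K" "y \<in> K"
      thus ?thesis using fe phiH x y Sc[of x] unfolding f_def by auto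
    next
      assume "x \<notin> K" "y \<notin> K"
      thus ?thesis using fe unfolding f_def by auto
    qed
  qed
  have im: "f ` S \<subseteq> V" using phiH HV Sc unfolding f_def by auto
  have eq: "\<forall>x\<in>S. \<forall>y\<in>S. g_edges V E H K x y \<longleftrightarrow> E (f x) (f y)"
  proof (intro ballI)
    fix x y assume x: "x \<in> S" and y: "y \<in> S"
    show "g_edges V E H K x y \<longleftrightarrow> E (f x) (f y)"
    proof (cases "x \<in> K"; cases "y \<in> K")
      assume xK: "x \<in> K" and yK: "y \<in> K"
      have "g_edges V E H K x y \<longleftrightarrow> x \<noteq> y" using xK yK disj unfolding g_edges_def by blast
      moreover have "E (f x) (f y) \<longleftrightarrow> x \<noteq> y" using xK yK x y phiE irr unfolding f_def by auto
      ultimately show ?thesis by simp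
    next
      assume xK: "x \<in> K" and yK: "y \<notin> K"
      have yV: "y \<in> V - H" using Sc y yK by blast
      have "g_edges V E H K x y \<longleftrightarrow> (\<exists>h\<in>H. E y h)" using xK yV disj unfolding g_edges_def by blast
      moreover have "(\<exists>h\<in>H. E y h) \<longleftrightarrow> E y (\<phi> x)"
        using hom_all[OF hom yV] phiH xK x by blast
      ultimately show ?thesis using xK yK sym unfolding f_def by auto
    next
      assume xK: "x \<notin> K" and yK: "y \<in> K"
      have xV: "x \<in> V - H" using Sc x xK by blast
      have "g_edges V E H K x y \<longleftrightarrow> (\<exists>h\<in>H. E x h)" using yK xV disj unfolding g_edges_def by blast
      moreover have "(\<exists>h\<in>H. E x h) \<longleftrightarrow> E x (\<phi> y)"
        using hom_all[OF hom xV] phiH yK y by blast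
      ultimately show ?thesis using xK yK unfolding f_def by auto
    next
      assume xK: "x \<notin> K" and yK: "y \<notin> K"
      have xV: "x \<in> V - H" "y \<in> V - H" using Sc x xK y yK by auto
      thus ?thesis using xK yK disj unfolding g_edges_def f_def by auto
    qed
  qed
  show ?thesis using inj im eq by blast
qed

lemma embed:
  assumes sg: "simple_graph V E" and hom: "homogeneous V E H"
    and fK: "finite K" and disj: "K \<inter> V = {}" and cK: "card K = chi H E"
    and S: "S \<subseteq> g_vertices V H K"
    and tri: "\<forall>a\<in>S \<inter> K. \<forall>b\<in>S \<inter> K. \<forall>c\<in>S \<inter> K. a \<noteq> b \<longrightarrow> a \<noteq> c \<longrightarrow> b \<noteq> c \<longrightarrow> False"
  shows "\<exists>f. inj_on f S \<and> f ` S \<subseteq> V \<and> (\<forall>x\<in>S. \<forall>y\<in>S. g_edges V E H K x y \<longleftrightarrow> E (f x) (f y))"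
proof (cases "\<exists>a b. a \<in> S \<inter> K \<and> b \<in> S \<inter> K \<and> a \<noteq> b")
  case True
  then obtain a b where ab: "a \<in> S \<inter> K" "b \<in> S \<inter> K" "a \<noteq> b" by blast
  have sub: "S \<inter> K \<subseteq> {a, b}" using tri ab by blast
  have "card {a, b} \<le> card K" using ab fK by (intro card_mono) auto
  hence c2: "2 \<le> chi H E" using ab cK by simp
  have sym: "\<And>x y. E x y \<Longrightarrow> E y x" using sg unfolding simple_graph_def by blast
  obtain h1 h2 where hh: "h1 \<in> H" "h2 \<in> H" "E h1 h2"
  proof -
    { assume no: "\<not> (\<exists>x\<in>H. \<exists>y\<in>H. E x y)"
      have "colorable H E 1" unfolding colorable_def using no by (intro exI[of _ "\<lambda>_. 0"]) auto
      hence "chi H E \<le> 1" by (rule chi_le)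
      hence False using c2 by simp }
    thus ?thesis using that by blast
  qed
  define \<phi> where "\<phi> x = (if x = a then h1 else h2)" for x
  show ?thesis
  proof (rule embed_gen[OF sg hom disj S, of \<phi>])
    show "\<forall>x\<in>S \<inter> K. \<phi> x \<in> H" using hh unfolding \<phi>_def by auto
    show "\<forall>x\<in>S \<inter> K. \<forall>y\<in>S \<inter> K. x \<noteq> y \<longrightarrow> E (\<phi> x) (\<phi> y)"
    proof (intro ballI impI)
      fix x y assume "x \<in> S \<inter> K" "y \<in> S \<inter> K" "x \<noteq> y"
      hence "(x = a \<and> y = b) \<or> (x = b \<and> y = a)" using sub by blast
      thus "E (\<phi> x) (\<phi> y)" using hh sym ab(3) unfolding \<phi>_def by auto
    qed
  qed
next
  case False
  have "card H \<ge> 2" using hom unfolding homogeneous_def by blast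
  hence "H \<noteq> {}" by auto
  then obtain h0 where h0: "h0 \<in> H" by blast
  show ?thesis
    by (rule embed_gen[OF sg hom disj S, of "\<lambda>_. h0"]) (use h0 False in auto)
qed

lemma g_sym: "g_edges V E H K x y \<Longrightarrow> (\<And>x y. E x y \<Longrightarrow> E y x) \<Longrightarrow> g_edges V E H K y x"
  unfolding g_edges_def by blast

lemma odd_hole_transfer:
  assumes sg: "simple_graph V E" and hom: "homogeneous V E H"
    and fK: "finite K" and disj: "K \<inter> V = {}" and cK: "card K = chi H E"
    and oh: "has_odd_hole (g_vertices V H K) (g_edges V E H K)"
  shows "has_odd_hole V E"
proof -
  obtain vs where h: "is_hole (g_vertices V H K) (g_edges V E H K) vs" and o: "odd (length vs)"
    using oh unfolding has_odd_hole_def by blast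
  have S: "set vs \<subseteq> g_vertices V H K" using h unfolding is_hole_def by blast
  have tri: "\<forall>a\<in>set vs \<inter> K. \<forall>b\<in>set vs \<inter> K. \<forall>c\<in>set vs \<inter> K. a \<noteq> b \<longrightarrow> a \<noteq> c \<longrightarrow> b \<noteq> c \<longrightarrow> False"
  proof (intro ballI impI)
    fix a b c assume a: "a \<in> set vs \<inter> K" and b: "b \<in> set vs \<inter> K" and c: "c \<in> set vs \<inter> K"
      and d: "a \<noteq> b" "a \<noteq> c" "b \<noteq> c"
    show False
      by (rule hole_no_triangle[OF h, of a b c]) (use a b c d in \<open>auto simp: g_edges_def\<close>)
  qed
  obtain f where f: "inj_on f (set vs)" "f ` set vs \<subseteq> V"
      "\<forall>x\<in>set vs. \<forall>y\<in>set vs. g_edges V E H K x y \<longleftrightarrow> E (f x) (f y)"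
    using embed[OF sg hom fK disj cK S tri] by blast
  have "is_hole V E (map f vs)" using hole_transfer[OF h f] .
  thus ?thesis using o unfolding has_odd_hole_def by (intro exI[of _ "map f vs"]) simp
qed

lemma five_tri:
  fixes F :: "'a \<Rightarrow> 'a \<Rightarrow> bool"
  assumes "x \<in> {a,b,c,d,e}" "y \<in> {a,b,c,d,e}" "z \<in> {a,b,c,d,e}"
    "x \<noteq> y" "x \<noteq> z" "y \<noteq> z" "F x y" "F x z" "F y z"
    "\<not> F a c" "\<not> F c a" "\<not> F b d" "\<not> F d b" "\<not> F e b" "\<not> F b e"
       "\<not> F e c" "\<not> F c e" "\<not> F e d" "\<not> F d e"
  shows False
  using assms by (auto 0 0)

lemma banner_transfer:
  assumes sg: "simple_graph V E" and hom: "homogeneous V E H"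
    and fK: "finite K" and disj: "K \<inter> V = {}" and cK: "card K = chi H E"
    and bn: "has_banner (g_vertices V H K) (g_edges V E H K)"
  shows "has_banner V E"
proof -
  let ?W = "g_vertices V H K" and ?F = "g_edges V E H K"
  obtain a b c d e where h: "is_hole ?W ?F [a, b, c, d]" and eW: "e \<in> ?W"
    and en: "e \<notin> {a, b, c, d}" and ea: "?F e a" and eb: "\<not> ?F e b" and ec: "\<not> ?F e c"
    and ed: "\<not> ?F e d"
    using bn unfolding has_banner_def by blast
  have sym: "\<And>x y. E x y \<Longrightarrow> E y x" using sg unfolding simple_graph_def by blast
  have Fsym: "\<And>x y. ?F x y \<Longrightarrow> ?F y x" using g_sym[of V E H K] sym by blast
  have HH: "\<forall>i<length [a,b,c,d]. \<forall>j<length [a,b,c,d]. ?F ([a,b,c,d] ! i) ([a,b,c,d] ! j) \<longleftrightarrow>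
     (j = Suc i mod length [a,b,c,d] \<or> i = Suc j mod length [a,b,c,d])"
    using h unfolding is_hole_def by blast
  have nac: "\<not> ?F a c" using HH[rule_format, of 0 2] by simp
  have nbd: "\<not> ?F b d" using HH[rule_format, of 1 3] by simp
  let ?S = "{a, b, c, d, e}"
  have S: "?S \<subseteq> ?W" using h eW unfolding is_hole_def by auto
  have Kedge: "\<And>x y. x \<in> K \<Longrightarrow> y \<in> K \<Longrightarrow> x \<noteq> y \<Longrightarrow> ?F x y" unfolding g_edges_def by blast
  have nca: "\<not> ?F c a" using nac Fsym by blast
  have ndb: "\<not> ?F d b" using nbd Fsym by blast
  have nbe: "\<not> ?F b e" using eb Fsym by blast
  have nce: "\<not> ?F c e" using ec Fsym by blast
  have nde: "\<not> ?F d e" using ed Fsym by blast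
  have tri: "\<forall>x\<in>?S \<inter> K. \<forall>y\<in>?S \<inter> K. \<forall>z\<in>?S \<inter> K. x \<noteq> y \<longrightarrow> x \<noteq> z \<longrightarrow> y \<noteq> z \<longrightarrow> False"
  proof (intro ballI impI)
    fix x y z assume x: "x \<in> ?S \<inter> K" and y: "y \<in> ?S \<inter> K" and z: "z \<in> ?S \<inter> K"
      and dd: "x \<noteq> y" "x \<noteq> z" "y \<noteq> z"
    have e1: "?F x y" "?F x z" "?F y z" using Kedge x y z dd by auto
    have xs: "x \<in> {a,b,c,d,e}" "y \<in> {a,b,c,d,e}" "z \<in> {a,b,c,d,e}" using x y z by auto
    show False
      using five_tri[OF xs dd e1 nac nca nbd ndb eb nbe ec nce ed nde] .
  qed
  obtain f where f0: "inj_on f ?S \<and> f ` ?S \<subseteq> V \<and>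
      (\<forall>x\<in>?S. \<forall>y\<in>?S. ?F x y \<longleftrightarrow> E (f x) (f y))"
    using embed[OF sg hom fK disj cK S tri] ..
  note f = conjunct1[OF f0] conjunct1[OF conjunct2[OF f0]] conjunct2[OF conjunct2[OF f0]]
  have hs: "set [a,b,c,d] \<subseteq> ?S" by auto
  have f1: "inj_on f (set [a,b,c,d])" using inj_on_subset[OF f(1) hs] .
  have f2: "f ` set [a,b,c,d] \<subseteq> V" using f(2) hs by blast
  have f3: "\<forall>x\<in>set [a,b,c,d]. \<forall>y\<in>set [a,b,c,d]. ?F x y \<longleftrightarrow> E (f x) (f y)"
    using f(3) hs by blast
  have "is_hole V E (map f [a,b,c,d])" using hole_transfer[OF h f1 f2 f3] .
  hence h2: "is_hole V E [f a, f b, f c, f d]" by simp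
  have eS: "e \<in> ?S" by simp
  have fe: "f e \<in> V" using f(2) eS by blast
  have fn: "f e \<notin> {f a, f b, f c, f d}"
    using f(1) en unfolding inj_on_def by blast
  have "E (f e) (f a)" "\<not> E (f e) (f b)" "\<not> E (f e) (f c)" "\<not> E (f e) (f d)"
    using f(3) ea eb ec ed eS by auto
  thus ?thesis using h2 fe fn unfolding has_banner_def by blast
qed

theorem mainTheorem6:
  fixes V H K :: "'a set" and E :: "'a \<Rightarrow> 'a \<Rightarrow> bool"
  assumes "simple_graph V E"
    and "homogeneous V E H"
    and "finite K" and "K \<inter> V = {}" and "card K = chi H E"
  shows "chi V E = chi (g_vertices V H K) (g_edges V E H K)
    \<and> ((\<not> has_banner V E \<and> \<not> has_odd_hole V E) \<longrightarrow>
        (\<not> has_banner (g_vertices V H K) (g_edges V E H K) \<and>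
         \<not> has_odd_hole (g_vertices V H K) (g_edges V E H K)))"
proof
  have "colorable V E = colorable (g_vertices V H K) (g_edges V E H K)"
    using part1_to[OF assms] part1_from[OF assms] by (intro ext) blast
  thus "chi V E = chi (g_vertices V H K) (g_edges V E H K)" unfolding chi_def by simp
  show "(\<not> has_banner V E \<and> \<not> has_odd_hole V E) \<longrightarrow>
        (\<not> has_banner (g_vertices V H K) (g_edges V E H K) \<and>
         \<not> has_odd_hole (g_vertices V H K) (g_edges V E H K))"
    using banner_transfer[OF assms] odd_hole_transfer[OF assms] by blast
qed

end
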